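(* Under the standing assumptions below, for every position $\mathbf v\in\mathsf{P}$, either $\mathrm{val}(\mathbf v)=\mathsf{\Omega}$ or $\mathrm{val}(\mathbf v)<\omega_1$ (the first uncountable ordinal).
   Context: Standing assumptions: $(\mathcal{X}_t)_{t\ge1}$ Polish, $(\mathcal{Y}_t)_{t\ge1}$ countable; game: in round $t$, $\mathrm{P_A}$ plays $x_t\in\mathcal{X}_t$ then $\mathrm{P_L}$ plays $y_t\in\mathcal{Y}_t$; $\mathrm{P_L}$ wins iff the play lies in $\mathsf{W}\subseteq\prod_{t\ge1}(\mathcal{X}_t\times\mathcal{Y}_t)$, where $\mathsf{W}$ is coanalytic and finitely decidable (every element of $\mathsf{W}$ has a finite prefix all of whose continuations lie in $\mathsf{W}$); $\mathrm{P_L}$ has a winning strategy. Definitions: $\mathsf{P}_n=\prod_{t=1}^n(\mathcal{X}_t\times\mathcal{Y}_t)$ (with $\mathsf P_0=\{\varnothing\}$), $\mathsf{P}=\bigcup_{n\ge0}\mathsf{P}_n$ (positions). A position $\mathbf v\in\mathsf P_n$ is active if some continuation $\mathbf w\in\prod_{t>n}(\mathcal{X}_t\times\mathcal{Y}_t)$ has $(\mathbf v,\mathbf w)\notin\mathsf{W}$; $\mathsf A_n\subseteq\mathsf P_n$ is the set of active positions, $\mathsf A=\bigcup_n\mathsf A_n$. For $\mathbf v\in\mathsf P_k$, a decision tree of depth $n$ with starting position $\mathbf v$ is a collection $\mathbf t=\{x_{\mathbf y}\in\mathcal{X}_{k+s+1}:\mathbf y\in\prod_{r=k+1}^{k+s}\mathcal{Y}_r,\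 0\le s<n\}$ ($\mathbf t=\varnothing$ is the tree of depth 0); it is active if $(\mathbf v,x_\varnothing,y_{k+1},x_{y_{k+1}},y_{k+2},\ldots,x_{y_{k+1},\ldots,y_{k+n-1}},y_{k+n})\in\mathsf A_{k+n}$ for all $(y_{k+1},\ldots,y_{k+n})\in\prod_{r=k+1}^{k+n}\mathcal{Y}_r$. $\mathsf T^{\mathsf A}_{\mathbf v}$ is the set of active trees (of all finite depths) with starting position $\mathbf v$. On it, $\mathbf t'\prec_{\mathbf v}\mathbf t$ iff $\mathbf t$ is obtained from $\mathbf t'$ by removing its leaves (deepest level). A relation is well-founded if every nonempty subset has a minimal element; its rank function is defined by transfinite recursion: $\rho(\mathbf t)=0$ if $\mathbf t$ is minimal, otherwise $\rho(\mathbf t)=\sup\{\rho(\mathbf t')+1:\mathbf t'\prec\mathbf t\}$. Adjoin symbols $-1<$ every ordinal $<\mathsf{\Omega}$. The game value $\mathrm{val}:\mathsf P\to\mathrm{ORD}\cup\{-1,\mathsf\Omega\}$ is: $\mathrm{val}(\mathbf v)=-1$ if $\mathbf v\notin\mathsf A$; $\mathrm{val}(\mathbf v)=\mathsf\Omega$ if $\mathbf v\in\mathsf A$ and $\prec_{\mathbf v}$ is not well-founded; otherwise $\mathrm{val}(\mathbf v)=\rho_{\prec_{\mathbf v}}(\varnothing)$. *)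

theory Defs
  imports "HOL-Analysis.Analysis"
begin

text \<open>Rounds are indexed from 0: round index i (0-based) is round t = i+1 of
the paper.  So X i is the (Polish) space of moves of the adversary in round i+1 and
Y i the countable set of moves of the learner.\<close>

definition Polish_space :: "'a topology \<Rightarrow> bool" where
  "Polish_space T \<longleftrightarrow> completely_metrizable_space T \<and> separable_space T"

definition baire_space :: "(nat \<Rightarrow> nat) topology" where
  "baire_space = product_topology (\<lambda>_. discrete_topology UNIV) UNIV"

text \<open>Analytic subsets of a Polish space (Kechris 14.1): empty, or a continuous image of
the Baire space (equivalently, of some Polish space).  Coanalytic: complement analytic.\<close>
definition analytic_in :: "'a topology \<Rightarrow> 'a set \<Rightarrow> bool" where
  "analytic_in T A \<longleftrightarrow> A \<subseteq> topspace T \<and>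
     (A = {} \<or> (\<exists>f. continuous_map baire_space T f \<and> f ` topspace baire_space = A))"

definition coanalytic_in :: "'a topology \<Rightarrow> 'a set \<Rightarrow> bool" where
  "coanalytic_in T A \<longleftrightarrow> A \<subseteq> topspace T \<and> analytic_in T (topspace T - A)"

definition play_space :: "(nat \<Rightarrow> 'x topology) \<Rightarrow> (nat \<Rightarrow> 'y set) \<Rightarrow> (nat \<Rightarrow> 'x \<times> 'y) topology" where
  "play_space X Y = product_topology (\<lambda>i. prod_topology (X i) (discrete_topology (Y i))) UNIV"

definition plays :: "(nat \<Rightarrow> 'x topology) \<Rightarrow> (nat \<Rightarrow> 'y set) \<Rightarrow> (nat \<Rightarrow> 'x \<times> 'y) set" where
  "plays X Y = {w. \<forall>i. w i \<in> topspace (X i) \<times> Y i}"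

definition positions_n :: "(nat \<Rightarrow> 'x topology) \<Rightarrow> (nat \<Rightarrow> 'y set) \<Rightarrow> nat \<Rightarrow> ('x \<times> 'y) list set" where
  "positions_n X Y n = {v. length v = n \<and> (\<forall>i<n. v ! i \<in> topspace (X i) \<times> Y i)}"

definition positions :: "(nat \<Rightarrow> 'x topology) \<Rightarrow> (nat \<Rightarrow> 'y set) \<Rightarrow> ('x \<times> 'y) list set" where
  "positions X Y = (\<Union>n. positions_n X Y n)"

definition finitely_decidable :: "(nat \<Rightarrow> 'x topology) \<Rightarrow> (nat \<Rightarrow> 'y set) \<Rightarrow> (nat \<Rightarrow> 'x \<times> 'y) set \<Rightarrow> bool" where
  "finitely_decidable X Y W \<longleftrightarrow>
     (\<forall>w\<in>W. \<exists>n. \<forall>w'\<in>plays X Y. (\<forall>i<n. w' i = w i) \<longrightarrow> w' \<in> W)"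

definition learner_strategy :: "(nat \<Rightarrow> 'x topology) \<Rightarrow> (nat \<Rightarrow> 'y set) \<Rightarrow> (('x \<times> 'y) list \<Rightarrow> 'x \<Rightarrow> 'y) \<Rightarrow> bool" where
  "learner_strategy X Y \<sigma> \<longleftrightarrow>
     (\<forall>v x. v \<in> positions_n X Y (length v) \<and> x \<in> topspace (X (length v)) \<longrightarrow> \<sigma> v x \<in> Y (length v))"

definition winning_learner_strategy :: "(nat \<Rightarrow> 'x topology) \<Rightarrow> (nat \<Rightarrow> 'y set) \<Rightarrow> (nat \<Rightarrow> 'x \<times> 'y) set \<Rightarrow> (('x \<times> 'y) list \<Rightarrow> 'x \<Rightarrow> 'y) \<Rightarrow> bool" where
  "winning_learner_strategy X Y W \<sigma> \<longleftrightarrow> learner_strategy X Y \<sigma> \<and>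
     (\<forall>w\<in>plays X Y. (\<forall>i. snd (w i) = \<sigma> (map w [0..<i]) (fst (w i))) \<longrightarrow> w \<in> W)"

definition active :: "(nat \<Rightarrow> 'x topology) \<Rightarrow> (nat \<Rightarrow> 'y set) \<Rightarrow> (nat \<Rightarrow> 'x \<times> 'y) set \<Rightarrow> ('x \<times> 'y) list set" where
  "active X Y W = {v \<in> positions X Y.
     \<exists>w\<in>plays X Y. (\<forall>i<length v. w i = v ! i) \<and> w \<notin> W}"

text \<open>Decision trees with starting position of length k: a pair (n, t) with n the depth and
t a partial map defined exactly on the sequences ys in prod_{j<s} Y (k+j), s < n, with
t ys in X (k + length ys).\<close>
definition ys_seqs :: "(nat \<Rightarrow> 'y set) \<Rightarrow> nat \<Rightarrow> nat \<Rightarrow> 'y list set" where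
  "ys_seqs Y k s = {ys. length ys = s \<and> (\<forall>j<s. ys ! j \<in> Y (k + j))}"

definition decision_trees :: "(nat \<Rightarrow> 'x topology) \<Rightarrow> (nat \<Rightarrow> 'y set) \<Rightarrow> nat \<Rightarrow> (nat \<times> ('y list \<rightharpoonup> 'x)) set" where
  "decision_trees X Y k = {(n, t). dom t = (\<Union>s<n. ys_seqs Y k s) \<and>
      (\<forall>ys\<in>dom t. the (t ys) \<in> topspace (X (k + length ys)))}"

definition tree_path :: "('x \<times> 'y) list \<Rightarrow> ('y list \<rightharpoonup> 'x) \<Rightarrow> 'y list \<Rightarrow> ('x \<times> 'y) list" where
  "tree_path v t ys = v @ map (\<lambda>j. (the (t (take j ys)), ys ! j)) [0..<length ys]"

definition active_trees :: "(nat \<Rightarrow> 'x topology) \<Rightarrow> (nat \<Rightarrow> 'y set) \<Rightarrow> (nat \<Rightarrow> 'x \<times> 'y) set \<Rightarrow> ('x \<times> 'y) list \<Rightarrow> (nat \<times> ('y list \<rightharpoonup> 'x)) set" where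
  "active_trees X Y W v = {(n, t) \<in> decision_trees X Y (length v).
      \<forall>ys\<in>ys_seqs Y (length v) n. tree_path v t ys \<in> active X Y W}"

definition tree_prec :: "(nat \<Rightarrow> 'x topology) \<Rightarrow> (nat \<Rightarrow> 'y set) \<Rightarrow> (nat \<Rightarrow> 'x \<times> 'y) set \<Rightarrow> ('x \<times> 'y) list \<Rightarrow> ((nat \<times> ('y list \<rightharpoonup> 'x)) \<times> (nat \<times> ('y list \<rightharpoonup> 'x))) set" where
  "tree_prec X Y W v = {((n', t'), (n, t)).
      (n', t') \<in> active_trees X Y W v \<and> (n, t) \<in> active_trees X Y W v \<and>
      n' = Suc n \<and> t = t' |` {ys. length ys < n}}"

text \<open>rho is the rank function of the relation R on the set D, with values in the
well-order r (ordinals are represented as elements of the field of a well-order):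
rho x is the r-least element strictly above all rho y with (y, x) in R
(hence the r-least element if x is R-minimal).\<close>
definition rank_fn_into :: "'a set \<Rightarrow> ('a \<times> 'a) set \<Rightarrow> 'o rel \<Rightarrow> ('a \<Rightarrow> 'o) \<Rightarrow> bool" where
  "rank_fn_into D R r \<rho> \<longleftrightarrow> Well_order r \<and>
     (\<forall>x\<in>D. \<rho> x \<in> Field r \<and>
        (\<forall>y. (y, x) \<in> R \<longrightarrow> (\<rho> y, \<rho> x) \<in> r \<and> \<rho> y \<noteq> \<rho> x) \<and>
        (\<forall>b\<in>Field r. (\<forall>y. (y, x) \<in> R \<longrightarrow> (\<rho> y, b) \<in> r \<and> \<rho> y \<noteq> b) \<longrightarrow> (\<rho> x, b) \<in> r))"

definition val_is_Omega :: "(nat \<Rightarrow> 'x topology) \<Rightarrow> (nat \<Rightarrow> 'y set) \<Rightarrow> (nat \<Rightarrow> 'x \<times> 'y) set \<Rightarrow> ('x \<times> 'y) list \<Rightarrow> bool" where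
  "val_is_Omega X Y W v \<longleftrightarrow> v \<in> active X Y W \<and> \<not> wf (tree_prec X Y W v)"

text \<open>val v < omega_1: either val v = -1 (v not active), or v is active, \<prec>_v is
well-founded and its rank is a countable ordinal, i.e. the rank function of \<prec>_v
(on the active trees) takes values in a countable well-order (one on a subset of nat).
Since every active tree lies below the empty tree, this is the same as rank(empty) < omega_1.\<close>
definition val_lt_omega1 :: "(nat \<Rightarrow> 'x topology) \<Rightarrow> (nat \<Rightarrow> 'y set) \<Rightarrow> (nat \<Rightarrow> 'x \<times> 'y) set \<Rightarrow> ('x \<times> 'y) list \<Rightarrow> bool" where
  "val_lt_omega1 X Y W v \<longleftrightarrow> v \<notin> active X Y W \<or>
     (v \<in> active X Y W \<and> wf (tree_prec X Y W v) \<and>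
      (\<exists>(r :: nat rel) \<rho>. rank_fn_into (active_trees X Y W v) (tree_prec X Y W v) r \<rho>))"

end

theory Submission
  imports Defs
begin
unbundle cardinal_syntax


lemma countable_card_of_nat': "countable A \<longleftrightarrow> |A| \<le>o |UNIV::nat set|"
  unfolding countable_def card_of_ordLeq[symmetric] by auto

definition om1 :: "nat set rel" where "om1 = cardSuc |UNIV :: nat set|"

lemma om1_WO: "Well_order om1"
  unfolding om1_def by (simp add: cardSuc_Well_order card_of_Card_order)

lemma om1_Card: "Card_order om1"
  unfolding om1_def by (simp add: cardSuc_Card_order card_of_Card_order)

lemma om1_inf: "\<not> finite (Field om1)"
  unfolding om1_def by (simp add: card_of_cardSuc_finite)

lemma om1_underS_countable:
  assumes "a \<in> Field om1" shows "countable (underS om1 a)"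
proof -
  have "|underS om1 a| <o om1" using card_of_underS[OF om1_Card assms] .
  hence "|underS om1 a| \<le>o |UNIV :: nat set|"
    unfolding om1_def using cardSuc_ordLeq_ordLess[OF card_of_Card_order card_of_Card_order] by blast
  thus ?thesis by (simp add: countable_card_of_nat')
qed

lemma om1_under_countable:
  assumes "a \<in> Field om1" shows "countable {b. (b, a) \<in> om1}"
proof -
  have "{b. (b, a) \<in> om1} \<subseteq> insert a (underS om1 a)"
    unfolding underS_def by blast
  moreover have "countable (insert a (underS om1 a))"
    using om1_underS_countable[OF assms] by simp
  ultimately show ?thesis by (rule countable_subset)
qed

lemma om1_bound:
  assumes K: "countable K" "K \<subseteq> Field om1"
  shows "\<exists>b\<in>Field om1. \<forall>a\<in>K. (a, b) \<in> om1 \<and> a \<noteq> b"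
proof -
  have reg: "regularCard om1" unfolding om1_def
    apply (rule infinite_cardSuc_regularCard)
     apply (simp add: Field_card_of)
    by (rule card_of_Card_order)
  have "|K| \<le>o |UNIV :: nat set|" using K(1) by (simp add: countable_card_of_nat')
  moreover have "|UNIV :: nat set| <o om1" unfolding om1_def
    using cardSuc_greater[OF card_of_Card_order] by blast
  ultimately have "|K| <o om1" using ordLeq_ordLess_trans by blast
  hence "\<not> cofinal K om1" using reg K(2) unfolding regularCard_def
    using not_ordLess_ordIso by blast
  then obtain a where a: "a \<in> Field om1" "\<forall>b\<in>K. a = b \<or> (a, b) \<notin> om1"
    unfolding cofinal_def by blast
  interpret wo: wo_rel om1 using om1_WO by (simp add: wo_rel_def)
  have ba: "\<forall>b\<in>K. (b, a) \<in> om1"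
  proof
    fix b assume b: "b \<in> K"
    show "(b, a) \<in> om1"
    proof (cases "a = b")
      case True thus ?thesis using a(1) wo.REFL unfolding refl_on_def by blast
    next
      case False thus ?thesis using a b K(2) wo.TOTALS by blast
    qed
  qed
  have "Field om1 \<noteq> under om1 a"
    using Card_order_infinite_not_under[OF om1_Card om1_inf] by blast
  moreover have "under om1 a \<subseteq> Field om1" unfolding under_def Field_def by auto
  ultimately obtain c where c: "c \<in> Field om1" "c \<notin> under om1 a" by blast
  hence ca: "(c, a) \<notin> om1" unfolding under_def by auto
  hence ac: "(a, c) \<in> om1" "a \<noteq> c" using a(1) c(1) wo.TOTALS wo.REFL unfolding refl_on_def by blast+
  have tr: "trans om1" by (rule wo.TRANS)
  show ?thesis
  proof (intro bexI[of _ c] ballI conjI)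
    fix b assume b: "b \<in> K"
    show "(b, c) \<in> om1" using tr ba b ac(1) unfolding trans_def by blast
    show "b \<noteq> c" using ba b ca by blast
  qed (rule c(1))
qed


definition rkset :: "('a \<times> 'a) set \<Rightarrow> 'b rel \<Rightarrow> ('a \<Rightarrow> 'b) \<Rightarrow> 'a \<Rightarrow> 'b set" where
  "rkset Q r h x = {b \<in> Field r. \<forall>y. (y, x) \<in> Q \<longrightarrow> (h y, b) \<in> r \<and> h y \<noteq> b}"

definition rk :: "('a \<times> 'a) set \<Rightarrow> 'b rel \<Rightarrow> 'a \<Rightarrow> 'b" where
  "rk Q r = wfrec Q (\<lambda>h x. wo_rel.minim r (rkset Q r h x))"

lemma rkset_cut: "rkset Q r (cut h Q x) x = rkset Q r h x"
  unfolding rkset_def cut_def by auto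

lemma rk_eq: "wf Q \<Longrightarrow> rk Q r x = wo_rel.minim r (rkset Q r (rk Q r) x)"
  unfolding rk_def by (subst wfrec) (simp_all add: rkset_cut)

lemma rk_props:
  assumes Q: "wf Q" and r: "Well_order r" and ne: "rkset Q r (rk Q r) x \<noteq> {}"
  shows "rk Q r x \<in> rkset Q r (rk Q r) x"
    and "\<And>b. b \<in> rkset Q r (rk Q r) x \<Longrightarrow> (rk Q r x, b) \<in> r"
proof -
  interpret wo: wo_rel r using r by (simp add: wo_rel_def)
  have sub: "rkset Q r (rk Q r) x \<subseteq> Field r" unfolding rkset_def by blast
  show "rk Q r x \<in> rkset Q r (rk Q r) x"
    unfolding rk_eq[OF Q, of r x] by (rule wo.minim_in[OF sub ne])
  fix b assume "b \<in> rkset Q r (rk Q r) x"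
  thus "(rk Q r x, b) \<in> r"
    unfolding rk_eq[OF Q, of r x] by (rule wo.minim_least[OF sub])
qed

lemma rk_countable_type:
  fixes Q :: "('a::countable \<times> 'a) set"
  assumes Q: "wf Q"
  shows "rkset Q om1 (rk Q om1) x \<noteq> {}"
  using Q
proof (induction x rule: wf_induct_rule)
  case (less x)
  have IH: "\<And>y. (y, x) \<in> Q \<Longrightarrow> rk Q om1 y \<in> Field om1"
  proof -
    fix y assume "(y, x) \<in> Q"
    hence "rk Q om1 y \<in> rkset Q om1 (rk Q om1) y" by (rule rk_props(1)[OF Q om1_WO less.IH])
    thus "rk Q om1 y \<in> Field om1" unfolding rkset_def by simp
  qed
  let ?K = "rk Q om1 ` {y. (y, x) \<in> Q}"
  have c: "countable ?K" by (rule countable_image) (rule countableI_type)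
  have s: "?K \<subseteq> Field om1" using IH by blast
  obtain b where b: "b \<in> Field om1" "\<forall>a\<in>?K. (a, b) \<in> om1 \<and> a \<noteq> b"
    using om1_bound[OF c s] by blast
  have "b \<in> rkset Q om1 (rk Q om1) x" unfolding rkset_def using b by simp
  thus ?case by blast
qed

lemma pack_rank:
  fixes \<rho> :: "'a \<Rightarrow> 'b"
  assumes r: "Well_order r" and cnt: "countable (\<rho> ` D)"
    and dom: "\<And>x y. (y, x) \<in> R \<Longrightarrow> y \<in> D"
    and props: "\<And>x. x \<in> D \<Longrightarrow> \<rho> x \<in> Field r \<and> (\<forall>y. (y, x) \<in> R \<longrightarrow> (\<rho> y, \<rho> x) \<in> r \<and> \<rho> y \<noteq> \<rho> x) \<and>
        (\<forall>b\<in>Field r. (\<forall>y. (y, x) \<in> R \<longrightarrow> (\<rho> y, b) \<in> r \<and> \<rho> y \<noteq> b) \<longrightarrow> (\<rho> x, b) \<in> r)"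
  shows "\<exists>(r' :: nat rel) \<rho>'. rank_fn_into D R r' \<rho>'"
proof -
  let ?V = "\<rho> ` D"
  let ?g = "to_nat_on ?V"
  let ?r0 = "Restr r ?V"
  have inj: "inj_on ?g ?V" using cnt by (rule inj_on_to_nat_on)
  have wo0: "Well_order ?r0" using r by (rule Well_order_Restr)
  have F0: "Field ?r0 = ?V"
    using props r by (intro Refl_Field_Restr2) (auto simp: order_on_defs)
  let ?r' = "dir_image ?r0 ?g"
  have wo': "Well_order ?r'" using wo0 inj F0 by (intro Well_order_dir_image) simp_all
  have F': "Field ?r' = ?g ` ?V" using F0 by (simp add: dir_image_Field)
  have mem: "\<And>a b. a \<in> ?V \<Longrightarrow> b \<in> ?V \<Longrightarrow> (?g a, ?g b) \<in> ?r' \<longleftrightarrow> (a, b) \<in> r"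
  proof
    fix a b assume a: "a \<in> ?V" and b: "b \<in> ?V"
    assume "(?g a, ?g b) \<in> ?r'"
    then obtain a' b' where e: "?g a = ?g a'" "?g b = ?g b'" and ab: "(a', b') \<in> ?r0"
      unfolding dir_image_def by blast
    hence a'V: "a' \<in> ?V" and b'V: "b' \<in> ?V" by auto
    have "a = a'" by (rule inj_onD[OF inj e(1) a a'V])
    moreover have "b = b'" by (rule inj_onD[OF inj e(2) b b'V])
    ultimately show "(a, b) \<in> r" using ab by simp
  next
    fix a b assume a: "a \<in> ?V" and b: "b \<in> ?V" and "(a, b) \<in> r"
    thus "(?g a, ?g b) \<in> ?r'" unfolding dir_image_def by blast
  qed
  have "rank_fn_into D R ?r' (?g \<circ> \<rho>)"
    unfolding rank_fn_into_def
  proof (intro conjI ballI allI impI)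
    show "Well_order ?r'" by (rule wo')
  next
    fix x assume x: "x \<in> D"
    show "(?g \<circ> \<rho>) x \<in> Field ?r'" using x F' by simp
  next
    fix x y assume x: "x \<in> D" and yx: "(y, x) \<in> R"
    have y: "y \<in> D" using dom yx .
    show "((?g \<circ> \<rho>) y, (?g \<circ> \<rho>) x) \<in> ?r'" using mem x y props[OF x] yx by simp
    show "(?g \<circ> \<rho>) y \<noteq> (?g \<circ> \<rho>) x" using inj x y props[OF x] yx
      unfolding inj_on_def by auto
  next
    fix x b' assume x: "x \<in> D" and b': "b' \<in> Field ?r'"
      and H: "\<forall>y. (y, x) \<in> R \<longrightarrow> ((?g \<circ> \<rho>) y, b') \<in> ?r' \<and> (?g \<circ> \<rho>) y \<noteq> b'"
    from b' F' obtain b where b: "b \<in> ?V" "b' = ?g b" by blast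
    have bF: "b \<in> Field r" using b props by blast
    have "\<forall>y. (y, x) \<in> R \<longrightarrow> (\<rho> y, b) \<in> r \<and> \<rho> y \<noteq> b"
    proof (intro allI impI)
      fix y assume yx: "(y, x) \<in> R"
      have y: "y \<in> D" using dom yx .
      from H yx b show "(\<rho> y, b) \<in> r \<and> \<rho> y \<noteq> b" using mem[of "\<rho> y" b] y by auto
    qed
    hence "(\<rho> x, b) \<in> r" using props[OF x] bF by blast
    thus "((?g \<circ> \<rho>) x, b') \<in> ?r'" using mem x b by simp
  qed
  thus ?thesis by blast
qed

lemma tree_path_length[simp]: "length (tree_path v t ys) = length v + length ys"
  unfolding tree_path_def by simp

lemma tree_path_nth_v: "i < length v \<Longrightarrow> tree_path v t ys ! i = v ! i"
  unfolding tree_path_def by (simp add: nth_append)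

lemma tree_path_nth_ys: "l < length ys \<Longrightarrow> tree_path v t ys ! (length v + l) = (the (t (take l ys)), ys ! l)"
  unfolding tree_path_def by (simp add: nth_append)

lemma tree_path_prefix:
  assumes "l \<le> length ys'" "i < length v + l"
  shows "tree_path v t (take l ys') ! i = tree_path v t ys' ! i"
proof (cases "i < length v")
  case True thus ?thesis by (simp add: tree_path_nth_v)
next
  case False
  then obtain l' where i: "i = length v + l'" and l': "l' < l" using assms(2)
    by (metis add_less_cancel_left le_add_diff_inverse not_less)
  have "tree_path v t (take l ys') ! i = (the (t (take l' (take l ys'))), take l ys' ! l')"
    unfolding i using l' assms(1) by (intro tree_path_nth_ys) simp
  also have "\<dots> = (the (t (take l' ys')), ys' ! l')" using l' by (simp add: min_def)
  also have "\<dots> = tree_path v t ys' ! i" unfolding i using l' assms(1)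
    by (simp add: tree_path_nth_ys)
  finally show ?thesis .
qed

lemma tree_path_cong:
  assumes "\<And>j. j < length ys \<Longrightarrow> t (take j ys) = t' (take j ys)"
  shows "tree_path v t ys = tree_path v t' ys"
  unfolding tree_path_def using assms by simp

lemma topspace_play_space: "topspace (play_space X Y) = plays X Y"
  unfolding play_space_def plays_def by (auto simp: PiE_def extensional_def)

lemma topspace_baire: "topspace baire_space = UNIV"
  unfolding baire_space_def by (auto simp: PiE_def extensional_def)

lemma ys_seqs_length: "ys \<in> ys_seqs Y k s \<Longrightarrow> length ys = s"
  unfolding ys_seqs_def by simp

locale KM =
  fixes X :: "nat \<Rightarrow> 'x topology" and Y :: "nat \<Rightarrow> 'y set"
    and W :: "(nat \<Rightarrow> 'x \<times> 'y) set" and v :: "('x \<times> 'y) list"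
    and f :: "(nat \<Rightarrow> nat) \<Rightarrow> nat \<Rightarrow> 'x \<times> 'y"
  assumes haus: "\<And>i. Hausdorff_space (X i)"
    and cntY: "\<And>i. countable (Y i)"
    and Yne: "\<And>i. Y i \<noteq> {}"
    and fcont: "continuous_map baire_space (play_space X Y) f"
    and fimg: "range f = plays X Y - W"
    and vpos: "v \<in> positions X Y"
begin

abbreviation "k \<equiv> length v"

definition S :: "'y list set" where "S = {ys. \<forall>j<length ys. ys ! j \<in> Y (k + j)}"

definition e :: "nat \<Rightarrow> 'y list" where "e = from_nat_into S"

definition Good :: "nat \<Rightarrow> ('y list \<rightharpoonup> 'x) \<Rightarrow> ('y list \<Rightarrow> nat \<Rightarrow> nat) \<Rightarrow> bool" where
  "Good m t \<beta> \<longleftrightarrow> (\<forall>ys\<in>S. length ys \<le> m \<longrightarrow> (\<forall>i<k + length ys. f (\<beta> ys) i = tree_path v t ys ! i))"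

definition code :: "nat \<Rightarrow> ('y list \<Rightarrow> nat \<Rightarrow> nat) \<Rightarrow> nat list list" where
  "code m \<beta> = map (\<lambda>i. if length (e i) \<le> m then map (\<beta> (e i)) [0..<m] else []) [0..<m]"

definition Wit :: "nat list list \<Rightarrow> nat \<Rightarrow> ('y list \<rightharpoonup> 'x) \<Rightarrow> bool" where
  "Wit cs m t \<longleftrightarrow> length cs = m \<and> (m, t) \<in> active_trees X Y W v \<and> (\<exists>\<beta>. Good m t \<beta> \<and> cs = code m \<beta>)"

definition TT :: "(nat list list \<times> nat list list) set" where
  "TT = {(cs', cs). length cs' = Suc (length cs) \<and>
      (\<forall>i<length cs. take (length (cs ! i)) (cs' ! i) = cs ! i) \<and> (\<exists>t. Wit cs' (length cs') t)}"

lemma code_length[simp]: "length (code m \<beta>) = m"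
  unfolding code_def by simp

lemma code_nth: "i < m \<Longrightarrow> code m \<beta> ! i = (if length (e i) \<le> m then map (\<beta> (e i)) [0..<m] else [])"
  unfolding code_def by (simp del: upt_Suc)

lemma S_countable: "countable S"
proof -
  have "S \<subseteq> lists (\<Union>j. Y j)" unfolding S_def by (force simp: in_set_conv_nth)
  moreover have "countable (lists (\<Union>j. Y j))" using cntY by auto
  ultimately show ?thesis by (rule countable_subset)
qed

lemma S_ne: "[] \<in> S" unfolding S_def by simp

lemma e_surj: "ys \<in> S \<Longrightarrow> e (to_nat_on S ys) = ys"
  unfolding e_def using S_countable by simp

lemma ys_seqs_S: "ys \<in> ys_seqs Y k s \<Longrightarrow> ys \<in> S"
  unfolding ys_seqs_def S_def by simp

lemma S_take: "ys \<in> S \<Longrightarrow> take l ys \<in> S"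
  unfolding S_def by simp

lemma f_plays: "f b \<in> plays X Y" "f b \<notin> W"
  using fimg by blast+

lemma f_coord: "f b p \<in> topspace (X p) \<times> Y p"
  using f_plays(1) unfolding plays_def by blast

lemma extend_leaf:
  assumes "ys \<in> S" "length ys \<le> m"
  shows "\<exists>ys'. ys' \<in> ys_seqs Y k m \<and> take (length ys) ys' = ys"
proof -
  define zs where "zs = map (\<lambda>j. SOME y. y \<in> Y (k + length ys + j)) [0..<m - length ys]"
  have zs: "\<And>j. j < length zs \<Longrightarrow> zs ! j \<in> Y (k + length ys + j)"
    unfolding zs_def using Yne by (simp add: some_in_eq)
  have "ys @ zs \<in> ys_seqs Y k m"
    unfolding ys_seqs_def
  proof (intro CollectI conjI allI impI)
    show "length (ys @ zs) = m" using assms(2) unfolding zs_def by simp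
  next
    fix j assume "j < m"
    show "(ys @ zs) ! j \<in> Y (k + j)"
    proof (cases "j < length ys")
      case True thus ?thesis using assms(1) unfolding S_def by (simp add: nth_append)
    next
      case False
      hence "j - length ys < length zs" using \<open>j < m\<close> unfolding zs_def by simp
      from zs[OF this] False show ?thesis by (simp add: nth_append)
    qed
  qed
  thus ?thesis by (intro exI[of _ "ys @ zs"]) simp
qed

lemma active_play:
  assumes "p \<in> active X Y W"
  shows "\<exists>b. \<forall>i<length p. f b i = p ! i"
proof -
  from assms obtain w where "w \<in> plays X Y" "\<forall>i<length p. w i = p ! i" "w \<notin> W"
    unfolding active_def by blast
  moreover then obtain b where "w = f b" using fimg by blast
  ultimately show ?thesis by blast
qed

lemma Wit_exists:
  assumes act: "(m, t) \<in> active_trees X Y W v"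
  shows "\<exists>cs. Wit cs m t"
proof -
  have "\<forall>ys. \<exists>\<gamma>. ys \<in> S \<and> length ys \<le> m \<longrightarrow> (\<forall>i<k + length ys. f \<gamma> i = tree_path v t ys ! i)"
  proof (intro allI)
    fix ys
    show "\<exists>\<gamma>. ys \<in> S \<and> length ys \<le> m \<longrightarrow> (\<forall>i<k + length ys. f \<gamma> i = tree_path v t ys ! i)"
    proof (cases "ys \<in> S \<and> length ys \<le> m")
      case True
      then obtain ys' where ys': "ys' \<in> ys_seqs Y k m" "take (length ys) ys' = ys"
        using extend_leaf by blast
      have "tree_path v t ys' \<in> active X Y W" using act ys'(1) unfolding active_trees_def by blast
      then obtain b where b: "\<forall>i<length (tree_path v t ys'). f b i = tree_path v t ys' ! i"
        using active_play by blast
      have lys': "length ys' = m" using ys'(1) by (rule ys_seqs_length)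
      have "\<forall>i<k + length ys. f b i = tree_path v t ys ! i"
      proof (intro allI impI)
        fix i assume i: "i < k + length ys"
        have "tree_path v t ys ! i = tree_path v t (take (length ys) ys') ! i" using ys'(2) by simp
        also have "\<dots> = tree_path v t ys' ! i"
          using True lys' i by (intro tree_path_prefix) simp_all
        also have "\<dots> = f b i" using b i True lys' by simp
        finally show "f b i = tree_path v t ys ! i" by simp
      qed
      thus ?thesis by blast
    qed blast
  qed
  then obtain \<beta> where \<beta>: "\<And>ys. ys \<in> S \<and> length ys \<le> m \<longrightarrow> (\<forall>i<k + length ys. f (\<beta> ys) i = tree_path v t ys ! i)"
    by metis
  have "Good m t \<beta>" unfolding Good_def using \<beta> by blast
  hence "Wit (code m \<beta>) m t" unfolding Wit_def using act by auto
  thus ?thesis by blast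
qed

lemma prec_D:
  assumes "((m', t'), (m, t)) \<in> tree_prec X Y W v"
  shows "m' = Suc m" "t = t' |` {ys. length ys < m}"
    "(m', t') \<in> active_trees X Y W v" "(m, t) \<in> active_trees X Y W v"
  using assms unfolding tree_prec_def by auto

lemma Wit_step:
  assumes W: "Wit cs m t" and R: "((m', t'), (m, t)) \<in> tree_prec X Y W v"
  shows "\<exists>cs'. Wit cs' m' t' \<and> (cs', cs) \<in> TT"
proof -
  note P = prec_D[OF R]
  from W obtain \<beta> where \<beta>: "Good m t \<beta>" "cs = code m \<beta>" and lcs: "length cs = m"
    unfolding Wit_def by blast
  have same: "\<And>ys. length ys \<le> m \<Longrightarrow> tree_path v t' ys = tree_path v t ys"
    using P(2) by (intro tree_path_cong) (simp add: restrict_map_def)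
  have "\<forall>ys. \<exists>\<gamma>. ys \<in> ys_seqs Y k m' \<longrightarrow> (\<forall>i<k + length ys. f \<gamma> i = tree_path v t' ys ! i)"
  proof (intro allI)
    fix ys
    show "\<exists>\<gamma>. ys \<in> ys_seqs Y k m' \<longrightarrow> (\<forall>i<k + length ys. f \<gamma> i = tree_path v t' ys ! i)"
    proof (cases "ys \<in> ys_seqs Y k m'")
      case True
      hence "tree_path v t' ys \<in> active X Y W" using P(3) unfolding active_trees_def by blast
      then obtain b where "\<forall>i<length (tree_path v t' ys). f b i = tree_path v t' ys ! i"
        using active_play by blast
      thus ?thesis by auto
    qed blast
  qed
  then obtain \<gamma> where \<gamma>: "\<And>ys. ys \<in> ys_seqs Y k m' \<longrightarrow> (\<forall>i<k + length ys. f (\<gamma> ys) i = tree_path v t' ys ! i)"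
    by metis
  define \<beta>' where "\<beta>' = (\<lambda>ys. if length ys \<le> m then \<beta> ys else \<gamma> ys)"
  have good': "Good m' t' \<beta>'"
    unfolding Good_def
  proof (intro ballI impI allI)
    fix ys i assume ys: "ys \<in> S" and l: "length ys \<le> m'" and i: "i < k + length ys"
    show "f (\<beta>' ys) i = tree_path v t' ys ! i"
    proof (cases "length ys \<le> m")
      case True
      thus ?thesis using \<beta>(1) ys i same[OF True] unfolding Good_def \<beta>'_def by simp
    next
      case False
      hence "length ys = m'" using l P(1) by simp
      hence "ys \<in> ys_seqs Y k m'" using ys unfolding S_def ys_seqs_def by simp
      thus ?thesis using \<gamma> i False unfolding \<beta>'_def by simp
    qed
  qed
  have wit': "Wit (code m' \<beta>') m' t'"
    unfolding Wit_def using good' P(3) by auto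
  have "(code m' \<beta>', cs) \<in> TT"
    unfolding TT_def
  proof (intro CollectI case_prodI conjI allI impI exI)
    show "length (code m' \<beta>') = Suc (length cs)" using lcs P(1) by simp
    show "Wit (code m' \<beta>') (length (code m' \<beta>')) t'" using wit' by simp
  next
    fix i assume i: "i < length cs"
    show "take (length (cs ! i)) (code m' \<beta>' ! i) = cs ! i"
    proof (cases "length (e i) \<le> m")
      case True
      hence "cs ! i = map (\<beta> (e i)) [0..<m]" using i lcs \<beta>(2) by (simp add: code_nth)
      moreover have "code m' \<beta>' ! i = map (\<beta> (e i)) [0..<Suc m]"
        using i lcs P(1) True by (simp add: code_nth \<beta>'_def del: upt_Suc)
      ultimately show ?thesis by (simp add: take_map del: upt_Suc)
    next
      case False
      hence "cs ! i = []" using i lcs \<beta>(2) by (simp add: code_nth)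
      thus ?thesis by simp
    qed
  qed
  thus ?thesis using wit' by blast
qed

end

lemma baire_limit:
  assumes "\<And>n. eventually (\<lambda>j. g j n = l n) sequentially"
  shows "limitin baire_space g l sequentially"
  unfolding baire_space_def limitin_componentwise
proof (intro conjI ballI)
  show "l \<in> extensional UNIV" by simp
  show "\<forall>\<^sub>F a in sequentially. g a \<in> topspace (product_topology (\<lambda>_. discrete_topology UNIV) UNIV)"
    by (simp add: PiE_def extensional_def)
  fix i :: nat
  show "limitin (discrete_topology UNIV) (\<lambda>c. g c i) (l i) sequentially"
    by (rule limitin_eventually) (simp_all add: assms)
qed

lemma haus_unique:
  assumes "Hausdorff_space T" "limitin T g l sequentially"
    "eventually (\<lambda>j. g j = c) sequentially" "c \<in> topspace T"
  shows "l = c"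
proof -
  have A: "limitin T (\<lambda>j. c) l sequentially"
    using assms(3,2) by (rule limitin_transform_eventually)
  have B: "limitin T (\<lambda>j. c) c sequentially" using assms(4) by simp
  show ?thesis by (rule limitin_Hausdorff_unique[OF A B trivial_limit_sequentially assms(1)])
qed

lemma haus_unique2:
  assumes "Hausdorff_space T" "limitin T g l sequentially"
    "eventually (\<lambda>j. g j = h j) sequentially" "limitin T h l' sequentially"
  shows "l = l'"
proof -
  have A: "limitin T h l sequentially"
    using assms(3,2) by (rule limitin_transform_eventually)
  show ?thesis by (rule limitin_Hausdorff_unique[OF A assms(4) trivial_limit_sequentially assms(1)])
qed

context KM
begin

lemma TT_D: "(cs', cs) \<in> TT \<Longrightarrow> length cs' = Suc (length cs) \<and>
      (\<forall>i<length cs. take (length (cs ! i)) (cs' ! i) = cs ! i) \<and> (\<exists>t. Wit cs' (length cs') t)"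
  unfolding TT_def by auto

lemma wf_TT:
  assumes wfR: "wf (tree_prec X Y W v)"
  shows "wf TT"
proof (rule ccontr)
  assume "\<not> wf TT"
  then obtain c where c: "\<And>j. (c (Suc j), c j) \<in> TT"
    unfolding wf_iff_no_infinite_down_chain by blast
  define L0 where "L0 = length (c 0)"
  have lenc: "\<And>j. length (c j) = L0 + j"
  proof -
    fix j show "length (c j) = L0 + j"
    proof (induction j)
      case (Suc j)
      have "length (c (Suc j)) = Suc (length (c j))" using TT_D[OF c[of j]] by blast
      thus ?case using Suc by simp
    qed (simp add: L0_def)
  qed
  define D where "D j = Suc (L0 + j)" for j
  have "\<forall>j. \<exists>p. Good (D j) (fst p) (snd p) \<and> c (Suc j) = code (D j) (snd p) \<and> (D j, fst p) \<in> active_trees X Y W v"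
  proof
    fix j
    from TT_D[OF c[of j]] obtain t where "Wit (c (Suc j)) (length (c (Suc j))) t" by blast
    hence "Wit (c (Suc j)) (D j) t" using lenc unfolding D_def by simp
    then obtain b where "Good (D j) t b" "c (Suc j) = code (D j) b" "(D j, t) \<in> active_trees X Y W v"
      unfolding Wit_def by blast
    thus "\<exists>p. Good (D j) (fst p) (snd p) \<and> c (Suc j) = code (D j) (snd p) \<and> (D j, fst p) \<in> active_trees X Y W v"
      by (intro exI[of _ "(t, b)"]) simp
  qed
  from choice[OF this] obtain g where g0: "\<forall>j. Good (D j) (fst (g j)) (snd (g j)) \<and> c (Suc j) = code (D j) (snd (g j)) \<and> (D j, fst (g j)) \<in> active_trees X Y W v"
    by blast
  have g: "\<And>j. Good (D j) (fst (g j)) (snd (g j)) \<and> c (Suc j) = code (D j) (snd (g j))"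
    using g0 by blast
  define tt where "tt j = fst (g j)" for j
  define \<beta> where "\<beta> j = snd (g j)" for j
  have good: "\<And>j. Good (D j) (tt j) (\<beta> j)" and cc: "\<And>j. c (Suc j) = code (D j) (\<beta> j)"
    using g unfolding tt_def \<beta>_def by auto
  let ?I = "to_nat_on S"
  have cA: "\<beta> (Suc j) ys n = \<beta> j ys n"
    if ys: "ys \<in> S" and j: "?I ys + length ys \<le> j" and n: "n < D j" for ys j n
  proof -
    let ?i = "?I ys"
    have ei: "e ?i = ys" using ys by (rule e_surj)
    have i1: "?i < length (c (Suc j))" using lenc j by simp
    have tk: "take (length (c (Suc j) ! ?i)) (c (Suc (Suc j)) ! ?i) = c (Suc j) ! ?i"
      using TT_D[OF c[of "Suc j"]] i1 by blast
    have c1: "c (Suc j) ! ?i = map (\<beta> j ys) [0..<D j]"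
      unfolding cc using j ei by (subst code_nth) (auto simp: D_def)
    have c2: "c (Suc (Suc j)) ! ?i = map (\<beta> (Suc j) ys) [0..<D (Suc j)]"
      unfolding cc using j ei by (subst code_nth) (auto simp: D_def)
    have "take (D j) (map (\<beta> (Suc j) ys) [0..<D (Suc j)]) = map (\<beta> j ys) [0..<D j]"
      using tk c1 c2 by simp
    hence "take (D j) (map (\<beta> (Suc j) ys) [0..<D (Suc j)]) ! n = map (\<beta> j ys) [0..<D j] ! n"
      by simp
    thus ?thesis using n by (simp add: D_def del: upt_Suc)
  qed
  have cB: "\<beta> (j + d) ys n = \<beta> j ys n"
    if ys: "ys \<in> S" and j: "?I ys + length ys \<le> j" and n: "n < D j" for ys j n d
  proof (induction d)
    case (Suc d)
    have "\<beta> (Suc (j + d)) ys n = \<beta> (j + d) ys n"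
      using ys j n by (intro cA) (auto simp: D_def)
    thus ?case using Suc by simp
  qed simp
  define \<alpha> where "\<alpha> (ys::'y list) n = \<beta> (?I ys + length ys + n) ys n" for ys n
  have cC: "\<beta> j ys n = \<alpha> ys n" if ys: "ys \<in> S" and j: "?I ys + length ys + n \<le> j" for ys j n
  proof -
    obtain d where "j = (?I ys + length ys + n) + d" using j le_Suc_ex by blast
    thus ?thesis unfolding \<alpha>_def using cB[OF ys, of "?I ys + length ys + n" n d]
      by (simp add: D_def)
  qed
  have Lim: "limitin baire_space (\<lambda>j. \<beta> j ys) (\<alpha> ys) sequentially" if ys: "ys \<in> S" for ys
    using cC[OF ys] by (intro baire_limit) (auto simp: eventually_sequentially)
  have LimP: "limitin (prod_topology (X p) (discrete_topology (Y p))) (\<lambda>j. f (\<beta> j ys) p) (f (\<alpha> ys) p) sequentially"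
    if ys: "ys \<in> S" for ys p
  proof -
    have "limitin (play_space X Y) (f \<circ> (\<lambda>j. \<beta> j ys)) (f (\<alpha> ys)) sequentially"
      by (rule continuous_map_limit[OF fcont Lim[OF ys]])
    thus ?thesis unfolding play_space_def limitin_componentwise by (simp add: o_def)
  qed
  have LimF: "limitin (X p) (\<lambda>j. fst (f (\<beta> j ys) p)) (fst (f (\<alpha> ys) p)) sequentially"
    and LimS: "limitin (discrete_topology (Y p)) (\<lambda>j. snd (f (\<beta> j ys) p)) (snd (f (\<alpha> ys) p)) sequentially"
    if ys: "ys \<in> S" for ys p
    using LimP[OF ys, of p] unfolding limitin_pairwise by (simp_all add: o_def)
  have goodE: "f (\<beta> j ys) i = tree_path v (tt j) ys ! i"
    if ys: "ys \<in> S" and j: "length ys \<le> j" and i: "i < k + length ys" for ys j i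
    using good[of j] ys j i unfolding Good_def D_def by simp
  define y0 where "y0 (ys::'y list) = (SOME y. y \<in> Y (k + length ys))" for ys
  define ext where "ext (ys::'y list) = ys @ [y0 ys]" for ys
  have y0: "y0 ys \<in> Y (k + length ys)" for ys unfolding y0_def using Yne by (simp add: some_in_eq)
  have extS: "ext ys \<in> S" if "ys \<in> S" for ys
    using that y0[of ys] unfolding ext_def S_def by (auto simp: nth_append) (metis less_antisym)
  define xinf where "xinf (ys::'y list) = fst (f (\<alpha> (ext ys)) (k + length ys))" for ys
  have cD: "the (tt j ys) = fst (f (\<beta> j (ext ys)) (k + length ys))"
    if ys: "ys \<in> S" and j: "Suc (length ys) \<le> j" for ys j
  proof -
    have "f (\<beta> j (ext ys)) (k + length ys) = tree_path v (tt j) (ext ys) ! (k + length ys)"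
      using j by (intro goodE extS ys) (simp_all add: ext_def)
    also have "\<dots> = (the (tt j ys), y0 ys)"
      by (subst tree_path_nth_ys) (simp_all add: ext_def)
    finally show ?thesis by simp
  qed
  have cE: "limitin (X (k + length ys)) (\<lambda>j. the (tt j ys)) (xinf ys) sequentially"
    if ys: "ys \<in> S" for ys
  proof -
    have "limitin (X (k + length ys)) (\<lambda>j. fst (f (\<beta> j (ext ys)) (k + length ys))) (xinf ys) sequentially"
      unfolding xinf_def by (rule LimF[OF extS[OF ys]])
    moreover have "eventually (\<lambda>j. fst (f (\<beta> j (ext ys)) (k + length ys)) = the (tt j ys)) sequentially"
      using cD[OF ys] unfolding eventually_sequentially by (metis)
    ultimately show ?thesis by (rule limitin_transform_eventually[rotated])
  qed
  define pinf where "pinf (ys::'y list) = tree_path v (\<lambda>zs. Some (xinf zs)) ys" for ys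
  have cF: "f (\<alpha> ys) p = pinf ys ! p" if ys: "ys \<in> S" and p: "p < k + length ys" for ys p
  proof (cases "p < k")
    case True
    have vp: "v ! p \<in> topspace (X p) \<times> Y p" using vpos True
      unfolding positions_def positions_n_def by auto
    have ev: "eventually (\<lambda>j. f (\<beta> j ys) p = v ! p) sequentially"
      unfolding eventually_sequentially
      using goodE[OF ys _ p] True by (auto simp: tree_path_nth_v)
    have "fst (f (\<alpha> ys) p) = fst (v ! p)"
      using haus LimF[OF ys, of p] ev vp by (intro haus_unique[of "X p"]) (auto elim: eventually_mono)
    moreover have "snd (f (\<alpha> ys) p) = snd (v ! p)"
      using LimS[OF ys, of p] ev vp by (intro haus_unique[of "discrete_topology (Y p)"]) (auto elim: eventually_mono)
    ultimately show ?thesis using True unfolding pinf_def by (simp add: tree_path_nth_v prod_eq_iff)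
  next
    case False
    then obtain l where pl: "p = k + l" and l: "l < length ys" using p
      by (metis add_less_cancel_left le_add_diff_inverse not_less)
    have tl: "take l ys \<in> S" using ys by (rule S_take)
    have ltl: "length (take l ys) = l" using l by simp
    have ev: "eventually (\<lambda>j. f (\<beta> j ys) p = (the (tt j (take l ys)), ys ! l)) sequentially"
      unfolding eventually_sequentially
      using goodE[OF ys _ p] l by (auto simp: pl tree_path_nth_ys)
    have "fst (f (\<alpha> ys) p) = xinf (take l ys)"
      using haus LimF[OF ys, of p] cE[OF tl] ev unfolding ltl pl
      by (intro haus_unique2[of "X (k + l)"]) (auto elim: eventually_mono)
    moreover have yl: "ys ! l \<in> Y p" using ys l unfolding S_def pl by simp
    have "snd (f (\<alpha> ys) p) = ys ! l"
      using LimS[OF ys, of p] ev yl by (intro haus_unique[of "discrete_topology (Y p)"]) (auto elim: eventually_mono)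
    ultimately show ?thesis unfolding pinf_def pl using l by (simp add: tree_path_nth_ys prod_eq_iff)
  qed
  define u where "u N = (N, \<lambda>ys. if ys \<in> (\<Union>s<N. ys_seqs Y k s) then Some (xinf ys) else None)" for N
  have uact: "u N \<in> active_trees X Y W v" for N
  proof -
    let ?t = "\<lambda>ys. if ys \<in> (\<Union>s<N. ys_seqs Y k s) then Some (xinf ys) else None"
    have dt: "(N, ?t) \<in> decision_trees X Y k"
      unfolding decision_trees_def
    proof (intro CollectI case_prodI conjI ballI)
      show "dom ?t = (\<Union>s<N. ys_seqs Y k s)" by (auto simp: dom_def)
    next
      fix ys assume ysd: "ys \<in> dom ?t"
      show "the (?t ys) \<in> topspace (X (k + length ys))"
        using ysd f_coord[of "\<alpha> (ext ys)" "k + length ys"] unfolding xinf_def by (auto split: if_splits)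
    qed
    have act: "tree_path v ?t ys \<in> active X Y W" if ys: "ys \<in> ys_seqs Y k N" for ys
    proof -
      have ysS: "ys \<in> S" using ys by (rule ys_seqs_S)
      have lys: "length ys = N" using ys by (rule ys_seqs_length)
      have eq: "tree_path v ?t ys = pinf ys"
        unfolding pinf_def
      proof (rule tree_path_cong)
        fix j assume j: "j < length ys"
        have "take j ys \<in> ys_seqs Y k j" using ys j unfolding ys_seqs_def by simp
        thus "?t (take j ys) = Some (xinf (take j ys))" using j lys by auto
      qed
      have pf: "\<And>i. i < length (pinf ys) \<Longrightarrow> f (\<alpha> ys) i = pinf ys ! i"
        using cF[OF ysS] unfolding pinf_def by simp
      have "pinf ys \<in> positions_n X Y (k + N)"
        unfolding positions_n_def
      proof (intro CollectI conjI allI impI)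
        show "length (pinf ys) = k + N" unfolding pinf_def using lys by simp
      next
        fix i assume "i < k + N"
        hence "pinf ys ! i = f (\<alpha> ys) i" using pf lys unfolding pinf_def by simp
        thus "pinf ys ! i \<in> topspace (X i) \<times> Y i" using f_coord by simp
      qed
      hence "pinf ys \<in> positions X Y" unfolding positions_def by blast
      moreover have "f (\<alpha> ys) \<in> plays X Y" "f (\<alpha> ys) \<notin> W" by (rule f_plays)+
      ultimately show ?thesis unfolding eq active_def using pf by blast
    qed
    show ?thesis unfolding u_def active_trees_def using dt act by blast
  qed
  have uprec: "(u (Suc N), u N) \<in> tree_prec X Y W v" for N
  proof -
    have "snd (u N) = snd (u (Suc N)) |` {ys. length ys < N}"
    proof
      fix ys
      show "snd (u N) ys = (snd (u (Suc N)) |` {ys. length ys < N}) ys"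
        by (cases "length ys < N") (auto simp: u_def restrict_map_def ys_seqs_def)
    qed
    thus ?thesis using uact[of N] uact[of "Suc N"] unfolding tree_prec_def
      by (cases "u N", cases "u (Suc N)") (simp add: u_def)
  qed
  thus False using wfR unfolding wf_iff_no_infinite_down_chain by blast
qed

end

context KM
begin

lemma prec_dom: "(y, x) \<in> tree_prec X Y W v \<Longrightarrow> y \<in> active_trees X Y W v"
  unfolding tree_prec_def by auto

lemma TT_rank:
  assumes wfT: "wf TT"
  shows "rk TT om1 cs \<in> Field om1"
    and "(cs', cs) \<in> TT \<Longrightarrow> (rk TT om1 cs', rk TT om1 cs) \<in> om1 \<and> rk TT om1 cs' \<noteq> rk TT om1 cs"
proof -
  have "rk TT om1 cs \<in> rkset TT om1 (rk TT om1) cs"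
    by (rule rk_props(1)[OF wfT om1_WO rk_countable_type[OF wfT]])
  thus "rk TT om1 cs \<in> Field om1"
    and "(cs', cs) \<in> TT \<Longrightarrow> (rk TT om1 cs', rk TT om1 cs) \<in> om1 \<and> rk TT om1 cs' \<noteq> rk TT om1 cs"
    unfolding rkset_def by blast+
qed

lemma rank_bound:
  assumes wfR: "wf (tree_prec X Y W v)"
  shows "x \<in> active_trees X Y W v \<longrightarrow> rkset (tree_prec X Y W v) om1 (rk (tree_prec X Y W v) om1) x \<noteq> {} \<and>
     (\<forall>cs. Wit cs (fst x) (snd x) \<longrightarrow> (rk (tree_prec X Y W v) om1 x, rk TT om1 cs) \<in> om1)"
  using wfR
proof (induction x rule: wf_induct_rule)
  case (less x)
  let ?R = "tree_prec X Y W v"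
  have wfT: "wf TT" using wfR by (rule wf_TT)
  interpret wo: wo_rel om1 using om1_WO by (simp add: wo_rel_def)
  obtain m t where x: "x = (m, t)" by (cases x)
  show ?case
  proof
    assume xD: "x \<in> active_trees X Y W v"
    have key: "rk TT om1 cs \<in> rkset ?R om1 (rk ?R om1) x" if W: "Wit cs m t" for cs
      unfolding rkset_def
    proof (intro CollectI conjI allI impI)
      show "rk TT om1 cs \<in> Field om1" by (rule TT_rank(1)[OF wfT])
    next
      fix y assume yx: "(y, x) \<in> ?R"
      obtain m' t' where y: "y = (m', t')" by (cases y)
      obtain cs' where cs': "Wit cs' m' t'" "(cs', cs) \<in> TT"
        using Wit_step[OF W] yx unfolding x y by blast
      have yD: "y \<in> active_trees X Y W v" using yx by (rule prec_dom)
      have IH: "(rk ?R om1 y, rk TT om1 cs') \<in> om1" using less.IH[OF yx] yD cs'(1) y by simp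
      have T: "(rk TT om1 cs', rk TT om1 cs) \<in> om1" "rk TT om1 cs' \<noteq> rk TT om1 cs"
        using TT_rank(2)[OF wfT cs'(2)] by blast+
      show "(rk ?R om1 y, rk TT om1 cs) \<in> om1" using wo.TRANS IH T(1) unfolding trans_def by blast
      show "rk ?R om1 y \<noteq> rk TT om1 cs"
      proof
        assume "rk ?R om1 y = rk TT om1 cs"
        hence "(rk TT om1 cs, rk TT om1 cs') \<in> om1" using IH by simp
        hence "rk TT om1 cs = rk TT om1 cs'" using T(1) wo.ANTISYM unfolding antisym_def by blast
        thus False using T(2) by simp
      qed
    qed
    obtain cs0 where "Wit cs0 m t" using Wit_exists xD x by blast
    hence ne: "rkset ?R om1 (rk ?R om1) x \<noteq> {}" using key by blast
    have "\<forall>cs. Wit cs (fst x) (snd x) \<longrightarrow> (rk ?R om1 x, rk TT om1 cs) \<in> om1"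
      using key rk_props(2)[OF wfR om1_WO ne] x by simp
    thus "rkset ?R om1 (rk ?R om1) x \<noteq> {} \<and> (\<forall>cs. Wit cs (fst x) (snd x) \<longrightarrow> (rk ?R om1 x, rk TT om1 cs) \<in> om1)"
      using ne by blast
  qed
qed

lemma main_rank:
  assumes wfR: "wf (tree_prec X Y W v)"
  shows "\<exists>(r :: nat rel) \<rho>. rank_fn_into (active_trees X Y W v) (tree_prec X Y W v) r \<rho>"
proof -
  let ?R = "tree_prec X Y W v" and ?D = "active_trees X Y W v"
  let ?\<rho> = "rk ?R om1"
  have wfT: "wf TT" using wfR by (rule wf_TT)
  have inD: "x \<in> ?D \<Longrightarrow> ?\<rho> x \<in> rkset ?R om1 ?\<rho> x" for x
    using rank_bound[OF wfR, of x] rk_props(1)[OF wfR om1_WO] by blast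
  have cnt: "countable (?\<rho> ` ?D)"
  proof -
    have "?\<rho> ` ?D \<subseteq> (\<Union>cs. {b. (b, rk TT om1 cs) \<in> om1})"
    proof
      fix b assume "b \<in> ?\<rho> ` ?D"
      then obtain x where xD: "x \<in> ?D" and b: "b = ?\<rho> x" by blast
      obtain cs where "Wit cs (fst x) (snd x)" using Wit_exists[of "fst x" "snd x"] xD by auto
      hence "(b, rk TT om1 cs) \<in> om1" using rank_bound[OF wfR, of x] xD b by blast
      thus "b \<in> (\<Union>cs. {b. (b, rk TT om1 cs) \<in> om1})" by blast
    qed
    moreover have "countable (\<Union>cs. {b. (b, rk TT om1 cs) \<in> om1})"
      by (intro countable_UN countableI_type om1_under_countable TT_rank(1)[OF wfT])
    ultimately show ?thesis by (rule countable_subset)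
  qed
  show ?thesis
  proof (rule pack_rank[OF om1_WO cnt])
    fix x y assume "(y, x) \<in> ?R" thus "y \<in> ?D" by (rule prec_dom)
  next
    fix x assume xD: "x \<in> ?D"
    have m: "?\<rho> x \<in> rkset ?R om1 ?\<rho> x" by (rule inD[OF xD])
    have ne: "rkset ?R om1 ?\<rho> x \<noteq> {}" using m by blast
    show "?\<rho> x \<in> Field om1 \<and> (\<forall>y. (y, x) \<in> ?R \<longrightarrow> (?\<rho> y, ?\<rho> x) \<in> om1 \<and> ?\<rho> y \<noteq> ?\<rho> x) \<and>
        (\<forall>b\<in>Field om1. (\<forall>y. (y, x) \<in> ?R \<longrightarrow> (?\<rho> y, b) \<in> om1 \<and> ?\<rho> y \<noteq> b) \<longrightarrow> (?\<rho> x, b) \<in> om1)"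
    proof (intro conjI ballI impI allI)
      show "?\<rho> x \<in> Field om1" using m unfolding rkset_def by blast
    next
      fix y assume "(y, x) \<in> ?R"
      thus "(?\<rho> y, ?\<rho> x) \<in> om1" "?\<rho> y \<noteq> ?\<rho> x" using m unfolding rkset_def by blast+
    next
      fix b assume "b \<in> Field om1" "\<forall>y. (y, x) \<in> ?R \<longrightarrow> (?\<rho> y, b) \<in> om1 \<and> ?\<rho> y \<noteq> b"
      hence "b \<in> rkset ?R om1 ?\<rho> x" unfolding rkset_def by blast
      thus "(?\<rho> x, b) \<in> om1" by (rule rk_props(2)[OF wfR om1_WO ne])
    qed
  qed
qed

end

theorem mainTheorem15:
  fixes X :: "nat \<Rightarrow> 'x topology" and Y :: "nat \<Rightarrow> 'y set"
    and W :: "(nat \<Rightarrow> 'x \<times> 'y) set"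
  assumes polish: "\<And>i. Polish_space (X i)"
    and countable: "\<And>i. countable (Y i)"
    and coanalytic: "coanalytic_in (play_space X Y) W"
    and fin_dec: "finitely_decidable X Y W"
    and winning: "\<exists>\<sigma>. winning_learner_strategy X Y W \<sigma>"
    and v: "v \<in> positions X Y"
  shows "val_is_Omega X Y W v \<or> val_lt_omega1 X Y W v"
proof -
  consider "v \<notin> active X Y W" | "v \<in> active X Y W" "\<not> wf (tree_prec X Y W v)"
    | "v \<in> active X Y W" "wf (tree_prec X Y W v)" by blast
  then show ?thesis
  proof cases
    case 1 thus ?thesis unfolding val_lt_omega1_def by blast
  next
    case 2 thus ?thesis unfolding val_is_Omega_def by blast
  next
    case 3
    from 3(1) obtain w where w: "w \<in> plays X Y" "w \<notin> W" unfolding active_def by blast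
    have Yne: "\<And>i. Y i \<noteq> {}" using w unfolding plays_def by blast
    have haus: "\<And>i. Hausdorff_space (X i)"
      using polish unfolding Polish_space_def
      by (simp add: completely_metrizable_imp_metrizable_space metrizable_imp_Hausdorff_space)
    have an: "analytic_in (play_space X Y) (topspace (play_space X Y) - W)"
      using coanalytic unfolding coanalytic_in_def by blast
    have ne: "topspace (play_space X Y) - W \<noteq> {}" using w topspace_play_space by blast
    obtain f where f: "continuous_map baire_space (play_space X Y) f"
      "f ` topspace baire_space = topspace (play_space X Y) - W"
      using an ne unfolding analytic_in_def by blast
    have fimg: "range f = plays X Y - W" using f(2) by (simp add: topspace_baire topspace_play_space)
    interpret KM X Y W v f
      using haus countable Yne f(1) fimg v by unfold_locales
    obtain r \<rho> where "rank_fn_into (active_trees X Y W v) (tree_prec X Y W v) (r :: nat rel) \<rho>"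
      using main_rank[OF 3(2)] by blast
    thus ?thesis unfolding val_lt_omega1_def using 3 by blast
  qed
qed

end
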